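(* Let a program execution be a finite sequence of heaps $h_0,h_1,\dots,h_n$, where $h_0$ is the initial heap in which the only allocated object is the special object $\mathit{Void}$, which is open ($\mathit{Void}.\mathit{closed}=\mathit{False}$), and each $h_{i+1}$ is obtained from $h_i$ by one elementary step: either allocating a fresh object (with some initial attribute values), or updating a single attribute $x.a$ of an allocated object $x$ to a new value. Consider a verification methodology $M$ whose proof obligations guarantee, for every step of every execution of a program that satisfies them: (a) every freshly allocated object is open (its $\mathit{closed}$ attribute is $\mathit{False}$); (b) whenever $x.\mathit{owner}$ is updated or $x.\mathit{closed}$ is set to $\mathit{False}$, the object $x$ is free in the state before the step (i.e. $x.\mathit{owner}.\mathit{closed}=\mathit{False}$); (c) whenever $x.\mathit{closed}$ is updated to $\mathit{True}$, every object $o\in x.\mathit{owns}$ satisfies $o.\mathit{closed}=\mathit{True}$ and $o.\mathit{owner}=x$ in the state before the step; (d) whenever an attribute $x.a$ with $a\notin\{\mathit{closed},\mathit{owner}\}$ is updated, $x$ is open in the state before the step. Then every program that satisfies $M$'s proof obligations satisfies, in every heap of every execution, the property $$\forall o,p:\ p.\mathit{closed}\wedge o\in p.\mathit{owns}\ \Rightarrow\ o.\mathit{closed}\wedge o.\mathit{owner}=p \qquad \text{(G2)}$$ (quantifying over allocated objects).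
   Context: Every object has built-in (ghost) attributes: $\mathit{closed}$ (Boolean, encoding consistency), $\mathit{owner}$ (an object) and $\mathit{owns}$ (a set of objects). An object $o$ is open if $o.\mathit{closed}=\mathit{False}$, and free if $o.\mathit{owner}$ is open. Deallocation is not modeled, so allocated objects only reference allocated objects. *)

theory Defs
  imports Main
begin

text \<open>Heaps: the set of allocated objects, the ghost attributes closed, owner, owns,
  and all remaining (ordinary) attributes, named by 'f with values in 'v.\<close>
record ('o, 'f, 'v) heap =
  alloc  :: "'o set"
  closed :: "'o \<Rightarrow> bool"
  owner  :: "'o \<Rightarrow> 'o"
  owns   :: "'o \<Rightarrow> 'o set"
  fld    :: "'o \<Rightarrow> 'f \<Rightarrow> 'v"

text \<open>Elementary steps: allocation of a fresh object with initial attribute values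
  (closed, owner, owns, ordinary attributes), or update of a single attribute.\<close>
datatype ('o, 'f, 'v) action =
    Alloc 'o bool 'o "'o set" "'f \<Rightarrow> 'v"
  | SetClosed 'o bool
  | SetOwner 'o 'o
  | SetOwns 'o "'o set"
  | SetFld 'o 'f 'v

fun apply_action :: "('o, 'f, 'v) heap \<Rightarrow> ('o, 'f, 'v) action \<Rightarrow> ('o, 'f, 'v) heap" where
  "apply_action h (Alloc x c w S f) =
     h\<lparr>alloc := alloc h \<union> {x}, closed := (closed h)(x := c), owner := (owner h)(x := w),
       owns := (owns h)(x := S), fld := (fld h)(x := f)\<rparr>"
| "apply_action h (SetClosed x b) = h\<lparr>closed := (closed h)(x := b)\<rparr>"
| "apply_action h (SetOwner x v) = h\<lparr>owner := (owner h)(x := v)\<rparr>"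
| "apply_action h (SetOwns x S) = h\<lparr>owns := (owns h)(x := S)\<rparr>"
| "apply_action h (SetFld x a v) = h\<lparr>fld := (fld h)(x := (fld h x)(a := v))\<rparr>"

fun target :: "('o, 'f, 'v) action \<Rightarrow> 'o" where
  "target (Alloc x _ _ _ _) = x"
| "target (SetClosed x _) = x"
| "target (SetOwner x _) = x"
| "target (SetOwns x _) = x"
| "target (SetFld x _ _) = x"

definition step :: "('o, 'f, 'v) heap \<Rightarrow> ('o, 'f, 'v) action \<Rightarrow> ('o, 'f, 'v) heap \<Rightarrow> bool" where
  "step h a h' \<longleftrightarrow>
     (case a of Alloc x _ _ _ _ \<Rightarrow> x \<notin> alloc h | _ \<Rightarrow> target a \<in> alloc h)
     \<and> h' = apply_action h a"

text \<open>Standing assumption: allocated objects only reference allocated objects.\<close>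
definition refs_alloc :: "('o, 'f, 'v) heap \<Rightarrow> bool" where
  "refs_alloc h \<longleftrightarrow> (\<forall>x\<in>alloc h. owner h x \<in> alloc h \<and> owns h x \<subseteq> alloc h)"

definition initial_heap :: "'o \<Rightarrow> ('o, 'f, 'v) heap \<Rightarrow> bool" where
  "initial_heap void h \<longleftrightarrow> alloc h = {void} \<and> \<not> closed h void"

definition execution :: "'o \<Rightarrow> ('o, 'f, 'v) heap list \<Rightarrow> ('o, 'f, 'v) action list \<Rightarrow> bool" where
  "execution void hs acts \<longleftrightarrow>
     length hs = Suc (length acts) \<and> initial_heap void (hs ! 0)
     \<and> (\<forall>h\<in>set hs. refs_alloc h)
     \<and> (\<forall>i<length acts. step (hs ! i) (acts ! i) (hs ! Suc i))"

text \<open>Guarantees (a)-(d) of the methodology for a step performed in state h.\<close>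
fun obligations :: "('o, 'f, 'v) heap \<Rightarrow> ('o, 'f, 'v) action \<Rightarrow> bool" where
  "obligations h (Alloc x c w S f) = (\<not> c)"
| "obligations h (SetOwner x v) = (\<not> closed h (owner h x))"
| "obligations h (SetClosed x b) =
     ((\<not> b \<longrightarrow> \<not> closed h (owner h x))
      \<and> (b \<longrightarrow> (\<forall>y\<in>owns h x. closed h y \<and> owner h y = x)))"
| "obligations h (SetOwns x S) = (\<not> closed h x)"
| "obligations h (SetFld x a v) = (\<not> closed h x)"

definition G2 :: "('o, 'f, 'v) heap \<Rightarrow> bool" where
  "G2 h \<longleftrightarrow> (\<forall>y\<in>alloc h. \<forall>p\<in>alloc h.
      closed h p \<and> y \<in> owns h p \<longrightarrow> closed h y \<and> owner h y = p)"

end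

theory Submission
  imports Defs
begin

lemma G2_step:
  assumes r: "refs_alloc h" and g: "G2 h" and s: "step h a h'" and o: "obligations h a"
  shows "G2 h'"
proof -
  have G: "closed h y \<and> owner h y = p" if "y \<in> alloc h" "p \<in> alloc h" "closed h p" "y \<in> owns h p" for y p
    using g that unfolding G2_def by blast
  show ?thesis
proof (cases a)
  case (Alloc x c w S f)
  have xn: "x \<notin> alloc h" and h': "h' = apply_action h a" using s Alloc unfolding step_def by auto
  have nc: "\<not> c" using o Alloc by simp
  show ?thesis unfolding G2_def
  proof (intro ballI impI)
    fix y p assume y: "y \<in> alloc h'" and p: "p \<in> alloc h'" and cp: "closed h' p \<and> y \<in> owns h' p"
    have px: "p \<noteq> x" using cp nc h' Alloc by auto
    then have pa: "p \<in> alloc h" using p h' Alloc by auto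
    have "y \<in> owns h p" using cp px h' Alloc by simp
    then have ya: "y \<in> alloc h" using r pa unfolding refs_alloc_def by blast
    with xn have yx: "y \<noteq> x" by blast
    have "closed h p" using cp px h' Alloc by simp
    then have "closed h y \<and> owner h y = p" using G ya pa \<open>y \<in> owns h p\<close> by blast
    then show "closed h' y \<and> owner h' y = p" using yx h' Alloc by simp
  qed
next
  case (SetClosed x b)
  have h': "h' = apply_action h a" using s unfolding step_def by auto
  show ?thesis
  proof (cases b)
    case True
    show ?thesis unfolding G2_def
    proof (intro ballI impI)
      fix y p assume y: "y \<in> alloc h'" and p: "p \<in> alloc h'" and cp: "closed h' p \<and> y \<in> owns h' p"
      have al: "alloc h' = alloc h" "owns h' = owns h" "owner h' = owner h"
        "closed h' = (closed h)(x := True)" using h' SetClosed True by auto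
      show "closed h' y \<and> owner h' y = p"
      proof (cases "p = x")
        case True
        then show ?thesis using o SetClosed \<open>b\<close> cp al by auto
      next
        case False
        then have "closed h p" "y \<in> owns h p" "y \<in> alloc h" "p \<in> alloc h" using y p cp al by auto
        then have "closed h y \<and> owner h y = p" by (rule_tac G) auto
        then show ?thesis using al by auto
      qed
    qed
  next
    case False
    have nx: "\<not> (closed h p \<and> x \<in> owns h p)" if "p \<in> alloc h" for p
    proof
      assume c: "closed h p \<and> x \<in> owns h p"
      have "x \<in> alloc h" using c r that unfolding refs_alloc_def by blast
      then have "owner h x = p" using g c that unfolding G2_def by blast
      then show False using o SetClosed False c by simp
    qed
    show ?thesis unfolding G2_def
    proof (intro ballI impI)
      fix y p assume y: "y \<in> alloc h'" and p: "p \<in> alloc h'" and cp: "closed h' p \<and> y \<in> owns h' p"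
      have al: "alloc h' = alloc h" "owns h' = owns h" "owner h' = owner h"
        "closed h' = (closed h)(x := False)" using h' SetClosed False by auto
      have px: "p \<noteq> x" using cp al by auto
      have yx: "y \<noteq> x" using nx p cp px al by auto
      have "closed h p" "y \<in> owns h p" "y \<in> alloc h" "p \<in> alloc h" using y p cp al px by auto
      then have "closed h y \<and> owner h y = p" by (rule_tac G) auto
      then show "closed h' y \<and> owner h' y = p" using al yx by auto
    qed
  qed
next
  case (SetOwner x v)
  have h': "h' = apply_action h a" using s unfolding step_def by auto
  show ?thesis unfolding G2_def
  proof (intro ballI impI)
    fix y p assume y: "y \<in> alloc h'" and p: "p \<in> alloc h'" and cp: "closed h' p \<and> y \<in> owns h' p"
    have al: "alloc h' = alloc h" "owns h' = owns h" "owner h' = (owner h)(x := v)"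
      "closed h' = closed h" using h' SetOwner by auto
    have "closed h p" "y \<in> owns h p" "y \<in> alloc h" "p \<in> alloc h" using y p cp al by auto
    then have "closed h y \<and> owner h y = p" by (rule_tac G) auto
    moreover have "y \<noteq> x" using calculation o SetOwner cp al by auto
    ultimately show "closed h' y \<and> owner h' y = p" using al by auto
  qed
next
  case (SetOwns x S)
  have h': "h' = apply_action h a" using s unfolding step_def by auto
  show ?thesis unfolding G2_def
  proof (intro ballI impI)
    fix y p assume y: "y \<in> alloc h'" and p: "p \<in> alloc h'" and cp: "closed h' p \<and> y \<in> owns h' p"
    have al: "alloc h' = alloc h" "owns h' = (owns h)(x := S)" "owner h' = owner h"
      "closed h' = closed h" using h' SetOwns by auto
    have px: "p \<noteq> x" using o SetOwns cp al by auto
    have "closed h p" "y \<in> owns h p" "y \<in> alloc h" "p \<in> alloc h" using y p cp al px by auto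
    then have "closed h y \<and> owner h y = p" by (rule_tac G) auto
    then show "closed h' y \<and> owner h' y = p" using al by simp
  qed
next
  case (SetFld x f v)
  have h': "h' = apply_action h a" using s unfolding step_def by auto
  then have al: "alloc h' = alloc h" "owns h' = owns h" "owner h' = owner h"
      "closed h' = closed h" using SetFld by auto
  show ?thesis using G unfolding G2_def al by blast
qed
qed

theorem lemma1:
  fixes void :: 'o
    and hs :: "('o, 'f, 'v) heap list"
    and acts :: "('o, 'f, 'v) action list"
  assumes "execution void hs acts"
    and "\<forall>i<length acts. obligations (hs ! i) (acts ! i)"
  shows "\<forall>h\<in>set hs. G2 h"
proof -
  from assms(1) have len: "length hs = Suc (length acts)"
    and ini: "initial_heap void (hs ! 0)"
    and ra: "\<forall>h\<in>set hs. refs_alloc h"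
    and st: "\<forall>i<length acts. step (hs ! i) (acts ! i) (hs ! Suc i)"
    unfolding execution_def by auto
  have "G2 (hs ! i)" if "i \<le> length acts" for i
    using that
  proof (induction i)
    case 0
    then show ?case using ini unfolding initial_heap_def G2_def by auto
  next
    case (Suc i)
    then have i: "i < length acts" by simp
    have "refs_alloc (hs ! i)" using ra len i by simp
    moreover have "G2 (hs ! i)" using Suc i by simp
    ultimately show ?case using G2_step i st assms(2) by blast
  qed
  then show ?thesis using len by (metis in_set_conv_nth less_Suc_eq_le)
qed

end
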